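(* Let $G=\{G_t,t\geq 0\}$ be a centered Gaussian process such that $G_0=0$ and there exist constants $c>0$ and $\gamma\in(0,1)$ with $E[(G_t-G_s)^2]\leq c|t-s|^{2\gamma}$ for all $s,t\geq 0$. Let $\theta>0$, $\mu\in\mathbb{R}$, and let $X$ be the solution of $X_0=0$, $dX_t=\theta(\mu+X_t)dt+dG_t$, $t\geq0$. Then for any $\delta$ with $\gamma<\delta\leq 1$, almost surely, as $T\to\infty$, $$\frac{G_T}{T^{\delta}}\longrightarrow 0,\qquad \frac{e^{-\theta T}}{T}\int_0^T|G_tX_t|\,dt\longrightarrow 0.$$
   Context: $G$ is taken in a modification with locally $(\gamma-\varepsilon)$-Hölder continuous paths for every $\varepsilon\in(0,\gamma)$ (which exists by Kolmogorov–Centsov). The process $X$ is the unique pathwise solution of the equation, i.e. $X_t=\mu\theta t+\theta\int_0^t X_s\,ds+G_t$; explicitly $X_t=\mu(e^{\theta t}-1)+e^{\theta t}\int_0^t e^{-\theta s}dG_s$, where the integral is a Young integral. *)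

theory Defs
  imports "HOL-Probability.Probability"
begin

definition gaussian_rv :: "'a measure \<Rightarrow> ('a \<Rightarrow> real) \<Rightarrow> bool" where
  "gaussian_rv M Y \<longleftrightarrow>
     (\<exists>m \<sigma>. \<sigma> > 0 \<and> distributed M lborel Y (normal_density m \<sigma>))
   \<or> (Y \<in> borel_measurable M \<and> (\<exists>c. AE x in M. Y x = c))"

text \<open>A process indexed by times t \<ge> 0 is Gaussian if all its finite-dimensional
  distributions are jointly Gaussian, i.e. every finite linear combination of its
  values is a Gaussian random variable.\<close>
definition gaussian_process :: "'a measure \<Rightarrow> (real \<Rightarrow> 'a \<Rightarrow> real) \<Rightarrow> bool" where
  "gaussian_process M G \<longleftrightarrow>
     (\<forall>t\<ge>0. G t \<in> borel_measurable M) \<and>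
     (\<forall>S a. finite S \<longrightarrow> S \<subseteq> {0..} \<longrightarrow> gaussian_rv M (\<lambda>x. \<Sum>t\<in>S. a t * G t x))"

definition locally_holder_nonneg :: "real \<Rightarrow> (real \<Rightarrow> real) \<Rightarrow> bool" where
  "locally_holder_nonneg \<alpha> f \<longleftrightarrow>
     (\<forall>K\<ge>0. \<exists>C. \<forall>s\<in>{0..K}. \<forall>t\<in>{0..K}. \<bar>f t - f s\<bar> \<le> C * \<bar>t - s\<bar> powr \<alpha>)"

end

theory Submission
  imports Defs
begin



lemma pow_sum_le:
  fixes a b :: real
  shows "(a + b) ^ (2*k) \<le> 4^k * (a^(2*k) + b^(2*k))"
proof -
  define mx where "mx = max \<bar>a\<bar> \<bar>b\<bar>"
  have "\<bar>a + b\<bar> \<le> 2 * mx" unfolding mx_def by linarith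
  then have "\<bar>a + b\<bar> ^ (2*k) \<le> (2*mx)^(2*k)" by (intro power_mono) auto
  also have "\<dots> = 4^k * mx^(2*k)" by (simp add: power_mult power_mult_distrib)
  also have "mx^(2*k) \<le> \<bar>a\<bar>^(2*k) + \<bar>b\<bar>^(2*k)"
    unfolding mx_def by (cases "\<bar>a\<bar> \<le> \<bar>b\<bar>") (auto simp: max_def)
  finally have "\<bar>a + b\<bar> ^ (2*k) \<le> 4^k * (\<bar>a\<bar>^(2*k) + \<bar>b\<bar>^(2*k))" by simp
  moreover have "\<And>x::real. \<bar>x\<bar>^(2*k) = x^(2*k)"
    by (simp add: power_mult)
  ultimately show ?thesis by simp
qed

lemma gauss_tail:
  fixes Y :: "'a \<Rightarrow> real" and lam :: real and k :: nat
  assumes P: "prob_space M" and g: "gaussian_rv M Y" and lam: "0 < lam"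
  shows "integrable M (\<lambda>x. (Y x)^2) \<and>
    measure M {x\<in>space M. lam \<le> \<bar>Y x\<bar>} \<le>
      2 * 4^k * fact (2*k) * (prob_space.expectation M (\<lambda>x. (Y x)^2))^k / lam^(2*k)"
proof -
  interpret prob_space M by fact
  show ?thesis
  proof (cases "\<exists>m \<sigma>. \<sigma> > 0 \<and> distributed M lborel Y (normal_density m \<sigma>)")
    case True
    then obtain m \<sigma> where s: "\<sigma> > 0" and D: "distributed M lborel Y (normal_density m \<sigma>)" by auto
    have DZ0: "distributed M lborel (\<lambda>x. (-m) + 1 * Y x) (normal_density ((-m) + 1 * m) (\<bar>1\<bar> * \<sigma>))"
      by (rule normal_density_affine[OF D s]) simp
    have DZ: "distributed M lborel (\<lambda>x. Y x - m) (normal_density 0 \<sigma>)"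
      using DZ0 by simp
    have Ymeas[measurable]: "Y \<in> borel_measurable M"
      using D by (auto dest: distributed_measurable)
    have intZ: "integrable M (\<lambda>x. (Y x - m)^j)" for j
    proof -
      have "integrable lborel (\<lambda>x. normal_density 0 \<sigma> x * x^j)"
        using integrable_normal_moment[OF s, of 0 j] by simp
      then show ?thesis
        using distributed_integrable[OF DZ, of "\<lambda>x. x^j"] by simp
    qed
    have EZj: "expectation (\<lambda>x. (Y x - m)^j) = (\<integral>x. normal_density 0 \<sigma> x * x^j \<partial>lborel)" for j
      using distributed_integral[OF DZ, of "\<lambda>x. x^j"] by simp
    have EZ1: "expectation (\<lambda>x. (Y x - m)) = 0"
      using EZj[of 1] integral_normal_moment_odd[OF s, of 0 0] by simp
    have EZ2: "expectation (\<lambda>x. (Y x - m)^2) = \<sigma>^2"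
      using EZj[of 2] integral_normal_moment_even[OF s, of 0 1] by (simp add: power2_eq_square)
    have EZ2k: "expectation (\<lambda>x. (Y x - m)^(2*k)) \<le> fact (2*k) * \<sigma>^(2*k)"
    proof -
      have "expectation (\<lambda>x. (Y x - m)^(2*k)) = fact (2 * k) / ((2 / \<sigma>\<^sup>2)^k * fact k)"
        using EZj[of "2*k"] integral_normal_moment_even[OF s, of 0 k] by simp
      also have "\<dots> = fact (2*k) * \<sigma>^(2*k) / (2^k * fact k)"
        using s by (simp add: power_divide field_simps flip: power_mult)
      also have "\<dots> \<le> fact (2*k) * \<sigma>^(2*k)"
      proof (rule mult_imp_div_pos_le)
        have d1: "1 \<le> (2::real)^k * fact k"
          by (metis fact_ge_1 mult_ge1_I one_le_numeral one_le_power)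
        have "0 \<le> fact (2*k) * \<sigma>^(2*k)" using s by simp
        then show "fact (2*k) * \<sigma>^(2*k) \<le> fact (2*k) * \<sigma>^(2*k) * (2^k * fact k)"
          using d1 mult_le_cancel_left1 by (metis mult_left_mono mult.right_neutral)
      qed simp
      finally show ?thesis .
    qed
    have Yeq: "(\<lambda>x. (Y x)^2) = (\<lambda>x. (Y x - m)^2 + 2 * m * (Y x - m) + m^2)"
      by (auto simp: power2_eq_square algebra_simps)
    have intY2: "integrable M (\<lambda>x. (Y x)^2)"
      unfolding Yeq using intZ[of 2] intZ[of 1] by auto
    have EY2: "expectation (\<lambda>x. (Y x)^2) = \<sigma>^2 + m^2"
      unfolding Yeq using intZ[of 2] intZ[of 1] EZ1 EZ2 by (simp add: Bochner_Integration.integral_add prob_space)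
    define u where "u x = 4^k * ((Y x - m)^(2*k) + m^(2*k))" for x
    have intu: "integrable M u" unfolding u_def using intZ[of "2*k"] by auto
    have Eu: "expectation u = 4^k * (expectation (\<lambda>x. (Y x - m)^(2*k)) + m^(2*k))"
      unfolding u_def using intZ[of "2*k"] by (simp add: prob_space)
    have sub: "{x\<in>space M. lam \<le> \<bar>Y x\<bar>} \<subseteq> {x\<in>space M. lam^(2*k) \<le> u x}"
    proof safe
      fix x assume "x \<in> space M" "lam \<le> \<bar>Y x\<bar>"
      then have "lam^(2*k) \<le> \<bar>Y x\<bar>^(2*k)" using lam by (intro power_mono) auto
      also have "\<dots> = ((Y x - m) + m)^(2*k)" by (simp add: power_mult)
      also have "\<dots> \<le> u x" unfolding u_def by (rule pow_sum_le)
      finally show "lam^(2*k) \<le> u x" .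
    qed
    have "measure M {x\<in>space M. lam \<le> \<bar>Y x\<bar>} \<le> measure M {x\<in>space M. lam^(2*k) \<le> u x}"
      by (rule finite_measure_mono[OF sub]) (simp add: u_def)
    also have "\<dots> \<le> expectation u / lam^(2*k)"
      by (rule integral_Markov_inequality_measure[OF intu, of "space M"])
         (auto simp: u_def lam)
    also have "\<dots> \<le> 2 * 4^k * fact (2*k) * (\<sigma>^2 + m^2)^k / lam^(2*k)"
    proof (rule divide_right_mono)
      have s2: "\<sigma>^(2*k) \<le> (\<sigma>^2 + m^2)^k" unfolding power_mult by (intro power_mono) auto
      have m2: "m^(2*k) \<le> (\<sigma>^2 + m^2)^k" unfolding power_mult by (intro power_mono) auto
      have f1: "1 \<le> (fact (2*k) :: real)" by simp
      have "expectation u \<le> 4^k * (fact (2*k) * \<sigma>^(2*k) + m^(2*k))"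
        unfolding Eu using EZ2k by simp
      also have "\<dots> \<le> 4^k * (fact (2*k) * (\<sigma>^2 + m^2)^k + fact (2*k) * (\<sigma>^2 + m^2)^k)"
      proof -
        have nn: "0 \<le> (\<sigma>^2 + m^2)^k" by simp
        have "m^(2*k) \<le> fact (2*k) * (\<sigma>^2 + m^2)^k"
          using m2 mult_right_mono[OF f1 nn] by simp
        moreover have "fact (2*k) * \<sigma>^(2*k) \<le> fact (2*k) * (\<sigma>^2 + m^2)^k"
          using s2 by (intro mult_left_mono) auto
        ultimately show ?thesis by (intro mult_left_mono add_mono) auto
      qed
      finally show "expectation u \<le> 2 * 4^k * fact (2*k) * (\<sigma>^2 + m^2)^k" by simp
    qed (simp add: lam)
    finally show ?thesis using intY2 EY2 by simp
  next
    case False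
    then have Ym[measurable]: "Y \<in> borel_measurable M" and "\<exists>c. AE x in M. Y x = c"
      using g unfolding gaussian_rv_def by auto
    then obtain c where c: "AE x in M. Y x = c" by auto
    have c2: "AE x in M. (Y x)^2 = c^2" using c by auto
    have intY2: "integrable M (\<lambda>x. (Y x)^2)"
      by (rule integrable_cong_AE[THEN iffD2, OF _ _ c2]) auto
    have EY2: "expectation (\<lambda>x. (Y x)^2) = c^2"
      using integral_cong_AE[OF _ _ c2] by (simp add: prob_space)
    have nn: "0 \<le> 2 * 4^k * fact (2*k) * (c^2)^k / lam^(2*k)" by simp
    show ?thesis
    proof (cases "lam \<le> \<bar>c\<bar>")
      case True
      have "lam^(2*k) \<le> \<bar>c\<bar>^(2*k)" using True lam by (intro power_mono) auto
      then have "lam^(2*k) \<le> (c^2)^k" by (simp add: power_mult)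
      then have "1 \<le> (c^2)^k / lam^(2*k)" using lam by simp
      moreover have "1 \<le> 2 * 4^k * (fact (2*k)::real)"
        by (metis fact_ge_1 mult_ge1_I one_le_numeral one_le_power)
      ultimately have "1 \<le> 2 * 4^k * fact (2*k) * ((c^2)^k / lam^(2*k))"
        by (metis mult_ge1_I)
      then show ?thesis using intY2 EY2 prob_le_1[of "{x\<in>space M. lam \<le> \<bar>Y x\<bar>}"]
        by (metis (no_types, lifting) order_trans times_divide_eq_right)
    next
      case False
      have "AE x in M. x \<notin> {x\<in>space M. lam \<le> \<bar>Y x\<bar>}" using c False by auto
      then have "measure M {x\<in>space M. lam \<le> \<bar>Y x\<bar>} = 0"
        by (subst measure_eq_0_null_sets) (auto simp: AE_iff_null_sets)
      then show ?thesis using intY2 EY2 nn by simp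
    qed
  qed
qed



lemma holder_cont:
  fixes f :: "real \<Rightarrow> real"
  assumes H: "\<forall>s\<in>{0..K}. \<forall>t\<in>{0..K}. \<bar>f t - f s\<bar> \<le> C * \<bar>t - s\<bar> powr \<alpha>" and a: "0 < \<alpha>"
  shows "continuous_on {0..K} f"
  unfolding continuous_on_iff
proof (intro ballI allI impI)
  fix x e :: real assume x: "x \<in> {0..K}" and e: "0 < e"
  define d where "d = (e / (\<bar>C\<bar> + 1)) powr (1/\<alpha>)"
  have ep: "0 < e / (\<bar>C\<bar> + 1)" using e by simp
  have d: "0 < d" unfolding d_def using ep e by (smt (verit) powr_gt_zero)
  show "\<exists>d>0. \<forall>x'\<in>{0..K}. dist x' x < d \<longrightarrow> dist (f x') (f x) < e"
  proof (intro exI[of _ d] conjI ballI impI d)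
    fix y assume y: "y \<in> {0..K}" and dy: "dist y x < d"
    have "\<bar>y - x\<bar> powr \<alpha> < d powr \<alpha>"
      using dy a by (intro powr_less_mono2) (auto simp: dist_real_def)
    also have "d powr \<alpha> = e / (\<bar>C\<bar> + 1)"
      unfolding d_def using ep a e by (simp add: powr_powr)
    finally have lt: "\<bar>y - x\<bar> powr \<alpha> < e / (\<bar>C\<bar> + 1)" .
    have "\<bar>f y - f x\<bar> \<le> C * \<bar>y - x\<bar> powr \<alpha>" using H x y by auto
    also have "\<dots> \<le> \<bar>C\<bar> * \<bar>y - x\<bar> powr \<alpha>" by (intro mult_right_mono) auto
    also have "\<dots> \<le> \<bar>C\<bar> * (e / (\<bar>C\<bar> + 1))" using lt by (intro mult_left_mono) auto
    also have "\<dots> < e" using e by (simp add: field_simps)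
    finally show "dist (f y) (f x) < e" by (simp add: dist_real_def)
  qed
qed



lemma chain_dyadic:
  fixes g :: "real \<Rightarrow> real" and n :: real and a :: "nat \<Rightarrow> real"
  assumes H: "\<And>l i. i < 2^l \<Longrightarrow> \<bar>g (n + real (i+1) / 2^l) - g (n + real i / 2^l)\<bar> \<le> a l"
  shows "j \<le> 2^m \<Longrightarrow> \<bar>g (n + real j / 2^m) - g n\<bar> \<le> (\<Sum>l\<le>m. a l)"
proof (induction m arbitrary: j)
  case 0
  then have "j = 0 \<or> j = 1" by auto
  have h0: "\<bar>g (n + real (0+1) / 2^0) - g (n + real 0 / 2^0)\<bar> \<le> a 0" by (rule H) simp
  have "0 \<le> a 0" by (rule order_trans[OF abs_ge_zero h0])
  then show ?case using h0 \<open>j = 0 \<or> j = 1\<close> by auto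
next
  case (Suc m)
  define j' where "j' = j div 2"
  have j': "j' \<le> 2^m" using Suc.prems unfolding j'_def by auto
  have IH: "\<bar>g (n + real j' / 2^m) - g n\<bar> \<le> (\<Sum>l\<le>m. a l)" using Suc.IH[OF j'] .
  have eqp: "real (2*j') / 2^(Suc m) = real j' / 2^m" by simp
  have step: "\<bar>g (n + real j / 2^(Suc m)) - g (n + real j' / 2^m)\<bar> \<le> a (Suc m)"
  proof (cases "even j")
    case True
    then have "j = 2*j'" unfolding j'_def by auto
    then have "\<bar>g (n + real j / 2^(Suc m)) - g (n + real j' / 2^m)\<bar> = 0" using eqp by simp
    moreover have "0 \<le> a (Suc m)"
      by (rule order_trans[OF abs_ge_zero H[of 0 "Suc m"]]) simp
    ultimately show ?thesis by simp
  next
    case False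
    then have jj: "j = 2*j' + 1" unfolding j'_def by presburger
    then have lt: "2*j' < 2^(Suc m)" using Suc.prems by auto
    show ?thesis using H[OF lt] jj eqp by simp
  qed
  have "\<bar>g (n + real j / 2^(Suc m)) - g n\<bar> \<le> a (Suc m) + (\<Sum>l\<le>m. a l)"
    using step IH by linarith
  then show ?case by (simp add: add.commute)
qed

lemma chain_cont:
  fixes g :: "real \<Rightarrow> real" and n lam :: real and a :: "nat \<Rightarrow> real"
  assumes H: "\<And>l i. i < 2^l \<Longrightarrow> \<bar>g (n + real (i+1) / 2^l) - g (n + real i / 2^l)\<bar> \<le> a l"
    and S: "\<And>m. (\<Sum>l\<le>m. a l) \<le> lam"
    and cont: "continuous_on {n..n+1} g"
    and t: "t \<in> {n..n+1}"
  shows "\<bar>g t - g n\<bar> \<le> lam"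
proof -
  define j where "j m = nat \<lfloor>(t - n) * 2^m\<rfloor>" for m :: nat
  define d where "d m = n + real (j m) / 2^m" for m :: nat
  have jle: "j m \<le> 2^m" for m
  proof -
    have tt: "(t - n) * 2^m \<le> 2^m" using t by (auto intro: mult_left_le_one_le)
    have "\<lfloor>(t - n) * 2^m\<rfloor> \<le> 2^m" using floor_mono[OF tt] by simp
    then show ?thesis unfolding j_def by (simp add: nat_le_iff)
  qed
  have jreal: "real (j m) = of_int \<lfloor>(t - n) * 2^m\<rfloor>" for m
    unfolding j_def using t by simp
  have dist_d: "\<bar>d m - t\<bar> \<le> 1 / 2^m" for m
  proof -
    have a1: "of_int \<lfloor>(t - n) * 2^m\<rfloor> \<le> (t - n) * 2^m" by simp
    have a2: "(t - n) * 2^m < of_int \<lfloor>(t - n) * 2^m\<rfloor> + 1" by simp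
    have "d m - t = (of_int \<lfloor>(t - n) * 2^m\<rfloor> - (t - n) * 2^m) / 2^m"
      unfolding d_def jreal by (simp add: field_simps)
    then show ?thesis using a1 a2 by (simp add: abs_le_iff divide_le_eq field_simps)
  qed
  have dlim: "d \<longlonglongrightarrow> t"
  proof -
    have z: "(\<lambda>m. 1 / 2^m :: real) \<longlonglongrightarrow> 0"
      by (simp add: LIMSEQ_divide_realpow_zero)
    have "(\<lambda>m. d m - t) \<longlonglongrightarrow> 0"
    proof (rule Lim_null_comparison[of _ "\<lambda>m. 1/2^m"])
      show "\<forall>\<^sub>F m in sequentially. norm (d m - t) \<le> 1 / 2^m"
        using dist_d by (simp add: real_norm_def)
    qed (rule z)
    then show ?thesis by (simp add: LIM_zero_iff)
  qed
  have dmem: "d m \<in> {n..n+1}" for m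
  proof -
    have "real (j m) \<le> 2^m" using jle[of m] by (metis of_nat_le_iff of_nat_numeral of_nat_power)
    then have "real (j m) / 2^m \<le> 1" by simp
    moreover have "0 \<le> real (j m) / 2^m" by simp
    ultimately show ?thesis unfolding d_def by simp
  qed
  have "(\<lambda>m. g (d m)) \<longlonglongrightarrow> g t"
    using cont t dlim dmem by (auto simp: continuous_on_sequentially comp_def)
  then have lim: "(\<lambda>m. \<bar>g (d m) - g n\<bar>) \<longlonglongrightarrow> \<bar>g t - g n\<bar>"
    by (intro tendsto_intros)
  have "\<bar>g (d m) - g n\<bar> \<le> lam" for m
    unfolding d_def using chain_dyadic[OF H jle[of m]] S[of m] by simp
  then show ?thesis using lim by (intro LIMSEQ_le_const2[OF lim]) auto
qed



lemma incr_tail: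
  fixes G :: "real \<Rightarrow> 'a \<Rightarrow> real"
  assumes P: "prob_space M" and gp: "gaussian_process M G"
    and incr: "\<forall>s\<ge>0. \<forall>t\<ge>0. prob_space.expectation M (\<lambda>x. (G t x - G s x)\<^sup>2) \<le> c * \<bar>t - s\<bar> powr (2 * \<gamma>)"
    and s: "0 \<le> s" and t: "0 \<le> t" and lam: "0 < lam"
  shows "measure M {x\<in>space M. lam \<le> \<bar>G t x - G s x\<bar>} \<le>
      2 * 4^k * fact (2*k) * (c * \<bar>t - s\<bar> powr (2 * \<gamma>))^k / lam^(2*k)"
proof -
  interpret prob_space M by fact
  have g: "gaussian_rv M (\<lambda>x. G t x - G s x)"
  proof (cases "s = t")
    case True
    then show ?thesis unfolding gaussian_rv_def by auto
  next
    case False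
    define a where "a u = (if u = t then 1 else (-1::real))" for u
    have "gaussian_rv M (\<lambda>x. \<Sum>u\<in>{s,t}. a u * G u x)"
      using gp s t unfolding gaussian_process_def by auto
    moreover have "(\<lambda>x. \<Sum>u\<in>{s,t}. a u * G u x) = (\<lambda>x. G t x - G s x)"
      using False unfolding a_def by auto
    ultimately show ?thesis by simp
  qed
  note gt = gauss_tail[OF P g lam, of k]
  have E0: "0 \<le> expectation (\<lambda>x. (G t x - G s x)\<^sup>2)" by simp
  have Ele: "expectation (\<lambda>x. (G t x - G s x)\<^sup>2) \<le> c * \<bar>t - s\<bar> powr (2 * \<gamma>)"
    using incr s t by auto
  have "(expectation (\<lambda>x. (G t x - G s x)\<^sup>2))^k \<le> (c * \<bar>t - s\<bar> powr (2 * \<gamma>))^k"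
    by (rule power_mono[OF Ele E0])
  then have "2 * 4^k * fact (2*k) * (expectation (\<lambda>x. (G t x - G s x)\<^sup>2))^k / lam^(2*k) \<le>
      2 * 4^k * fact (2*k) * (c * \<bar>t - s\<bar> powr (2 * \<gamma>))^k / lam^(2*k)"
    using lam by (intro divide_right_mono mult_left_mono) auto
  then show ?thesis using gt by linarith
qed



lemma growth:
  fixes G :: "real \<Rightarrow> 'a \<Rightarrow> real"
  assumes P: "prob_space M" and gp: "gaussian_process M G"
    and incr: "\<forall>s\<ge>0. \<forall>t\<ge>0. prob_space.expectation M (\<lambda>x. (G t x - G s x)\<^sup>2) \<le> c * \<bar>t - s\<bar> powr (2 * \<gamma>)"
    and c: "0 < c" and g: "0 < \<gamma>" and d: "\<gamma> < d"
    and cont: "\<forall>x\<in>space M. \<forall>K. continuous_on {0..K} (\<lambda>t. G t x)"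
    and G0: "AE x in M. G 0 x = 0"
  shows "AE x in M. \<exists>N. \<forall>t\<ge>N. \<bar>G t x\<bar> \<le> 2 * (t + 1) powr d"
proof -
  interpret prob_space M by fact
  obtain k :: nat where kb: "2/\<gamma> + 1/(d-\<gamma>) < real k" using reals_Archimedean2 by blast
  have "2/\<gamma> < real k" using kb d by (smt (verit) divide_pos_pos)
  then have k1: "2 < \<gamma> * real k" using g by (simp add: divide_less_eq mult.commute)
  have "1/(d-\<gamma>) < real k" using kb g by (smt (verit) divide_pos_pos)
  then have k2: "1 < real k * (d - \<gamma>)" using d by (simp add: divide_less_eq)
  define \<rho> where "\<rho> = 2 powr (-\<gamma>/2)"
  have \<rho>0: "0 < \<rho>" unfolding \<rho>_def by simp
  have \<rho>1: "\<rho> < 1" unfolding \<rho>_def using g by (intro powr_less_one) auto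
  have \<rho>2k: "\<rho>^(2*k) = 2 powr (-\<gamma> * k)"
    unfolding \<rho>_def by (subst powr_power) (auto simp: field_simps)
  define \<beta> where "\<beta> = 2 * \<rho>^(2*k)"
  have \<beta>0: "0 \<le> \<beta>" unfolding \<beta>_def using \<rho>0 by simp
  have \<beta>1: "\<beta> < 1"
  proof -
    have "\<beta> = 2 powr 1 * 2 powr (-\<gamma> * k)" unfolding \<beta>_def \<rho>2k by simp
    also have "\<dots> = 2 powr (1 + (-\<gamma> * k))" by (rule powr_add[symmetric])
    also have "\<dots> < 1" using k1 by (intro powr_less_one) auto
    finally show ?thesis .
  qed
  have \<rho>4: "(1/2^l) powr (2*\<gamma>) = \<rho>^(4*l)" for l :: nat
  proof -
    have "(1/2^l :: real) = 2 powr (- real l)" by (simp add: powr_minus powr_realpow divide_inverse)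
    then have "(1/2^l) powr (2*\<gamma>) = 2 powr (- real l * (2*\<gamma>))" by (simp add: powr_powr)
    also have "\<dots> = \<rho>^(4*l)" unfolding \<rho>_def by (subst powr_power) (auto simp: field_simps)
    finally show ?thesis .
  qed
  define K :: real where "K = 2 * 4^k * fact (2*k)"
  have K0: "0 < K" unfolding K_def by simp
  define lam where "lam n = (real n + 1) powr d" for n :: nat
  have lam1: "1 \<le> lam n" for n unfolding lam_def using d g by (intro ge_one_powr_ge_zero) auto
  define a where "a n l = lam n * (1 - \<rho>) * \<rho>^l" for n l :: nat
  have apos: "0 < a n l" for n l unfolding a_def using lam1[of n] \<rho>0 \<rho>1 by auto
  define E0 where "E0 n = {x\<in>space M. lam n \<le> \<bar>G (real n) x - G 0 x\<bar>}" for n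
  define E1 where "E1 n l i = {x\<in>space M. a n l \<le> \<bar>G (real n + real (i+1) / 2^l) x - G (real n + real i / 2^l) x\<bar>}" for n l i :: nat
  define F where "F n l = (\<Union>i\<in>{..<(2::nat)^l}. E1 n l i)" for n l
  define B where "B n = E0 n \<union> (\<Union>l. F n l)" for n
  have meas_ev: "{x\<in>space M. v \<le> \<bar>G t x - G s x\<bar>} \<in> sets M" if "0 \<le> s" "0 \<le> t" for s t v
  proof -
    have [measurable]: "G t \<in> borel_measurable M" "G s \<in> borel_measurable M"
      using gp that unfolding gaussian_process_def by auto
    show ?thesis by measurable
  qed
  have E0m: "E0 n \<in> sets M" for n unfolding E0_def by (rule meas_ev) auto
  have E1m: "E1 n l i \<in> sets M" for n l i unfolding E1_def by (rule meas_ev) auto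
  have Fm: "F n l \<in> sets M" for n l unfolding F_def using E1m by auto
  have Bm: "B n \<in> sets M" for n unfolding B_def using E0m Fm by auto
  define C1 where "C1 = K * c^k / (1 - \<rho>)^(2*k)"
  have C10: "0 \<le> C1" unfolding C1_def using K0 c \<rho>1 by auto
  have E1b: "measure M (E1 n l i) \<le> C1 / lam n^(2*k) * (\<rho>^(2*k))^l" for n l i
  proof -
    have dd: "\<bar>(real n + real (i+1) / 2^l) - (real n + real i / 2^l)\<bar> = 1/2^l"
      by (simp add: field_simps)
    have "measure M (E1 n l i) \<le> K * (c * (1/2^l) powr (2 * \<gamma>))^k / (a n l)^(2*k)"
      unfolding E1_def K_def using incr_tail[OF P gp incr _ _ apos[of n l], of "real n + real i / 2^l" "real n + real (i+1) / 2^l" k] dd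
      by simp
    also have "\<dots> = C1 / lam n^(2*k) * (\<rho>^(2*k))^l"
    proof -
      define L where "L = lam n"
      have L0: "0 < L" using lam1[of n] unfolding L_def by simp
      have h1: "(c * \<rho>^(4*l))^k = c^k * (\<rho>^(2*k*l) * \<rho>^(2*k*l))"
      proof -
        have "(\<rho>^(4*l))^k = \<rho>^(2*k*l + 2*k*l)" by (simp add: power_mult[symmetric] algebra_simps)
        also have "\<dots> = \<rho>^(2*k*l) * \<rho>^(2*k*l)" by (rule power_add)
        finally show ?thesis by (simp add: power_mult_distrib)
      qed
      have h2: "(L * (1 - \<rho>) * \<rho>^l)^(2*k) = L^(2*k) * (1-\<rho>)^(2*k) * \<rho>^(2*k*l)"
      proof -
        have "(\<rho>^l)^(2*k) = \<rho>^(2*k*l)" by (simp add: power_mult[symmetric] algebra_simps)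
        then show ?thesis by (simp only: power_mult_distrib)
      qed
      have h3: "(\<rho>^(2*k))^l = \<rho>^(2*k*l)" by (simp add: power_mult)
      have nz: "L^(2*k) * (1-\<rho>)^(2*k) * \<rho>^(2*k*l) \<noteq> 0" using L0 \<rho>0 \<rho>1 by simp
      show ?thesis
        unfolding \<rho>4 C1_def a_def L_def[symmetric] h1 h2 h3 using nz \<rho>0 \<rho>1 L0
        by (simp add: field_simps)
    qed
    finally show ?thesis .
  qed
  have Fb: "measure M (F n l) \<le> C1 / lam n^(2*k) * \<beta>^l" for n l
  proof -
    have "measure M (F n l) \<le> (\<Sum>i\<in>{..<(2::nat)^l}. measure M (E1 n l i))"
      unfolding F_def by (rule measure_UNION_le) (auto intro: E1m)
    also have "\<dots> \<le> (\<Sum>i\<in>{..<(2::nat)^l}. C1 / lam n^(2*k) * (\<rho>^(2*k))^l)"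
      by (rule sum_mono) (rule E1b)
    also have "\<dots> = C1 / lam n^(2*k) * \<beta>^l"
      unfolding \<beta>_def by (simp add: power_mult_distrib)
    finally show ?thesis .
  qed
  have sumg: "summable (\<lambda>l. C1 / lam n^(2*k) * \<beta>^l)" for n
    using \<beta>0 \<beta>1 by (intro summable_mult summable_geometric) simp
  have sumF: "summable (\<lambda>l. measure M (F n l))" for n
    by (rule summable_comparison_test'[OF sumg[of n]]) (use Fb in simp)
  have UFb: "measure M (\<Union>l. F n l) \<le> C1 / lam n^(2*k) / (1 - \<beta>)" for n
  proof -
    have "measure M (\<Union>l. F n l) \<le> (\<Sum>l. measure M (F n l))"
      by (rule finite_measure_subadditive_countably) (use Fm sumF in auto)
    also have "\<dots> \<le> (\<Sum>l. C1 / lam n^(2*k) * \<beta>^l)"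
      by (rule suminf_le[OF Fb sumF sumg])
    also have "\<dots> = C1 / lam n^(2*k) / (1 - \<beta>)"
      using \<beta>0 \<beta>1 by (simp add: suminf_mult suminf_geometric divide_inverse)
    finally show ?thesis .
  qed
  define v where "v n = (real n + 1) powr (-(2*k*(d-\<gamma>)))" for n :: nat
  define C2 where "C2 = K * c^k + C1 / (1 - \<beta>)"
  have E0b: "measure M (E0 n) \<le> K * c^k * v n" for n
  proof -
    have "measure M (E0 n) \<le> K * (c * \<bar>real n - 0\<bar> powr (2 * \<gamma>))^k / (lam n)^(2*k)"
      unfolding E0_def K_def using incr_tail[OF P gp incr _ _, of 0 "real n" "lam n" k] lam1[of n] by simp
    also have "\<dots> \<le> K * c^k * v n"
    proof -
      have "(real n) powr (2*\<gamma>) \<le> (real n + 1) powr (2*\<gamma>)" using g by (intro powr_mono2) auto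
      then have "(c * real n powr (2*\<gamma>))^k \<le> (c * (real n + 1) powr (2*\<gamma>))^k"
        using c by (intro power_mono mult_left_mono) auto
      also have "\<dots> = c^k * (real n + 1) powr (real k * (2*\<gamma>))"
        by (simp add: power_mult_distrib powr_power)
      finally have num: "(c * real n powr (2*\<gamma>))^k \<le> c^k * (real n + 1) powr (real k * (2*\<gamma>))" .
      have den: "(lam n)^(2*k) = (real n + 1) powr (real (2*k) * d)"
        unfolding lam_def by (simp add: powr_power)
      have "K * (c * \<bar>real n - 0\<bar> powr (2 * \<gamma>))^k / (lam n)^(2*k)
          \<le> K * (c^k * (real n + 1) powr (real k * (2*\<gamma>))) / (real n + 1) powr (real (2*k) * d)"
        using num K0 unfolding den by (intro divide_right_mono mult_left_mono) auto
      also have "\<dots> = K * c^k * ((real n + 1) powr (real k * (2*\<gamma>)) / (real n + 1) powr (real (2*k) * d))"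
        by simp
      also have "(real n + 1) powr (real k * (2*\<gamma>)) / (real n + 1) powr (real (2*k) * d) = v n"
        unfolding v_def by (simp add: powr_diff[symmetric] algebra_simps)
      finally show ?thesis .
    qed
    finally show ?thesis .
  qed
  have Bb: "measure M (B n) \<le> C2 * v n" for n
  proof -
    have "measure M (B n) \<le> measure M (E0 n) + measure M (\<Union>l. F n l)"
      unfolding B_def by (rule measure_Un_le) (use E0m Fm in auto)
    also have "\<dots> \<le> K * c^k * v n + C1 / (1 - \<beta>) * v n"
    proof (rule add_mono[OF E0b])
      have "1 / lam n^(2*k) \<le> v n"
      proof -
        have "1 / lam n^(2*k) = (real n + 1) powr (-(real (2*k) * d))"
          unfolding lam_def by (simp add: powr_power powr_minus divide_inverse)
        also have "\<dots> \<le> v n" unfolding v_def using g d by (intro powr_mono) (auto intro: mult_left_mono)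
        finally show ?thesis .
      qed
      then have "C1 / (1 - \<beta>) * (1 / lam n^(2*k)) \<le> C1 / (1 - \<beta>) * v n"
        using C10 \<beta>1 by (intro mult_left_mono) auto
      then show "measure M (\<Union>l. F n l) \<le> C1 / (1 - \<beta>) * v n"
        using UFb[of n] by (simp add: mult.commute)
    qed
    also have "\<dots> = C2 * v n" unfolding C2_def by (simp add: algebra_simps)
    finally show ?thesis .
  qed
  have sumv: "summable v"
  proof -
    have "summable (\<lambda>n. real n powr (-(2*k*(d-\<gamma>))))"
      using k2 by (subst summable_real_powr_iff) (simp add: algebra_simps)
    then have "summable (\<lambda>n. real (Suc n) powr (-(2*k*(d-\<gamma>))))"
      by (subst summable_Suc_iff)
    then show ?thesis unfolding v_def by (simp add: add.commute)
  qed
  have sumB: "summable (\<lambda>n. measure M (B n))"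
    by (rule summable_comparison_test'[OF summable_mult[OF sumv, of C2]]) (use Bb in simp)
  have BC: "AE x in M. eventually (\<lambda>n. x \<in> space M - B n) sequentially"
    by (rule borel_cantelli_AE1[OF Bm _ sumB]) (simp add: emeasure_eq_measure)
  have asum: "(\<Sum>l\<le>m. a n l) \<le> lam n" for n m
  proof -
    have "(\<Sum>l\<le>m. a n l) = lam n * ((1 - \<rho>) * (\<Sum>l<Suc m. \<rho>^l))"
      unfolding a_def lessThan_Suc_atMost by (simp add: sum_distrib_left algebra_simps)
    also have "\<dots> = lam n * (1 - \<rho>^(Suc m))"
      by (simp only: one_diff_power_eq[of \<rho> "Suc m"])
    also have "\<dots> \<le> lam n" using lam1[of n] \<rho>0 by (simp add: mult_le_cancel_left1)
    finally show ?thesis .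
  qed
  show ?thesis
    using BC G0 AE_space
  proof eventually_elim
    case (elim x)
    then have xs: "x \<in> space M" by blast
    from elim obtain N0 where N0: "\<And>n. n \<ge> N0 \<Longrightarrow> x \<notin> B n"
      by (auto simp: eventually_sequentially)
    have bound: "\<bar>G t x\<bar> \<le> 2 * (t + 1) powr d" if t: "real N0 \<le> t" for t
    proof -
      define n where "n = nat \<lfloor>t\<rfloor>"
      have t0: "0 \<le> t" using t by (smt (verit) of_nat_0_le_iff)
      have nt: "real n \<le> t" "t \<le> real n + 1" unfolding n_def using t0 by linarith+
      have "N0 \<le> n" unfolding n_def using t by (rule le_nat_floor)
      then have xB: "x \<notin> B n" by (rule N0)
      then have h0: "\<bar>G (real n) x - G 0 x\<bar> \<le> lam n" unfolding B_def E0_def using xs by auto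
      have hl: "\<bar>G (real n + real (i+1) / 2^l) x - G (real n + real i / 2^l) x\<bar> \<le> a n l"
        if "i < 2^l" for l i
      proof -
        have "x \<notin> E1 n l i" using xB that unfolding B_def F_def by auto
        then show ?thesis unfolding E1_def using xs by auto
      qed
      have cn: "continuous_on {real n..real n + 1} (\<lambda>t. G t x)"
        using cont xs by (metis continuous_on_subset atLeastatMost_subset_iff of_nat_0_le_iff order_refl)
      have "\<bar>G t x - G (real n) x\<bar> \<le> lam n"
        by (rule chain_cont[where g="\<lambda>t. G t x", OF hl asum cn]) (use nt in auto)
      then have "\<bar>G t x\<bar> \<le> 2 * lam n" using h0 elim by auto
      also have "lam n \<le> (t + 1) powr d"
        unfolding lam_def using nt d g by (intro powr_mono2) auto
      finally show ?thesis by simp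
    qed
    then show ?case by blast
  qed
qed



lemma deriv_Y:
  fixes Xp :: "real \<Rightarrow> real"
  assumes cX: "continuous_on {0..} Xp" and t: "0 < t"
  shows "((\<lambda>u. integral {0..u} Xp) has_real_derivative Xp t) (at t)"
proof -
  have c: "continuous_on {0..t+1} Xp" using cX by (rule continuous_on_subset) auto
  have "((\<lambda>u. integral {0..u} Xp) has_vector_derivative Xp t) (at t within {0..t+1})"
    by (rule integral_has_vector_derivative[OF c]) (use t in auto)
  moreover have "at t within {0..t+1} = at t" using t by (intro at_within_Icc_at) auto
  ultimately show ?thesis by (simp add: has_real_derivative_iff_has_vector_derivative)
qed

lemma cont_Y:
  fixes Xp :: "real \<Rightarrow> real"
  assumes cX: "continuous_on {0..} Xp"
  shows "continuous_on {0..T} (\<lambda>u. integral {0..u} Xp)"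
proof -
  have c: "continuous_on {0..T} Xp" using cX by (rule continuous_on_subset) auto
  show ?thesis unfolding continuous_on_eq_continuous_within
    using integral_has_vector_derivative[OF c] has_vector_derivative_continuous by blast
qed

lemma Y_bound:
  fixes Xp Gp :: "real \<Rightarrow> real"
  assumes th: "0 < \<theta>" and cX: "continuous_on {0..} Xp"
    and eq: "\<forall>t\<ge>0. Xp t = \<mu> * \<theta> * t + \<theta> * integral {0..t} Xp + Gp t"
    and Gb: "\<forall>t\<ge>0. \<bar>\<mu> * \<theta> * t + Gp t\<bar> \<le> L * (t + 1)"
    and T: "0 \<le> T"
  shows "\<bar>integral {0..T} Xp\<bar> \<le> L * (1/\<theta> + 1/\<theta>^2) * exp (\<theta> * T)"
proof -
  define Y where "Y u = integral {0..u} Xp" for u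
  define \<Phi> where "\<Phi> u = exp (-\<theta>*u) * ((u+1)/\<theta> + 1/\<theta>^2)" for u
  define Q where "Q = L * (1/\<theta> + 1/\<theta>^2)"
  have Y0: "Y 0 = 0" unfolding Y_def by simp
  have \<Phi>0: "\<Phi> 0 = 1/\<theta> + 1/\<theta>^2" unfolding \<Phi>_def by simp
  have \<Phi>nn: "0 \<le> \<Phi> u" if "0 \<le> u" for u unfolding \<Phi>_def using th that by simp
  have dY: "(Y has_real_derivative Xp x) (at x)" if "0 < x" for x
    unfolding Y_def by (rule deriv_Y[OF cX that])
  have dW: "((\<lambda>u. exp (-\<theta>*u) * Y u) has_real_derivative exp (-\<theta>*x) * (Xp x - \<theta> * Y x)) (at x)"
    if "0 < x" for x
    by (rule derivative_eq_intros dY[OF that] refl | simp add: algebra_simps)+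
  have d\<Phi>: "(\<Phi> has_real_derivative (- (x+1) * exp (-\<theta>*x))) (at x)" for x
    unfolding \<Phi>_def using th
    by (auto intro!: derivative_eq_intros simp: field_simps power2_eq_square)
  have key: "exp (-\<theta>*x) * (Xp x - \<theta> * Y x) = exp (-\<theta>*x) * (\<mu> * \<theta> * x + Gp x)" if "0 < x" for x
    using eq that unfolding Y_def by auto
  have cW: "continuous_on {0..T} (\<lambda>u. exp (-\<theta>*u) * Y u)"
    unfolding Y_def by (intro continuous_intros cont_Y[OF cX])
  have c\<Phi>: "continuous_on {0..T} \<Phi>" unfolding \<Phi>_def by (intro continuous_intros) (use th in auto)
  have up: "-(exp (-\<theta>*0) * Y 0 + L * \<Phi> 0) \<le> -(exp (-\<theta>*T) * Y T + L * \<Phi> T)"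
  proof (rule DERIV_nonneg_imp_increasing_open[OF T])
    fix x assume x: "0 < x" "x < T"
    have "((\<lambda>u. -(exp (-\<theta>*u) * Y u + L * \<Phi> u)) has_real_derivative
        -(exp (-\<theta>*x) * (Xp x - \<theta> * Y x) + L * (- (x+1) * exp (-\<theta>*x)))) (at x)"
      by (intro derivative_intros DERIV_cmult d\<Phi> dW x)
    moreover have "0 \<le> -(exp (-\<theta>*x) * (Xp x - \<theta> * Y x) + L * (- (x+1) * exp (-\<theta>*x)))"
    proof -
      have "\<bar>\<mu> * \<theta> * x + Gp x\<bar> \<le> L * (x + 1)" using Gb x by simp
      then have "\<mu> * \<theta> * x + Gp x \<le> L * (x + 1)" by linarith
      then have "exp (-\<theta>*x) * (\<mu> * \<theta> * x + Gp x) \<le> exp (-\<theta>*x) * (L * (x + 1))"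
        by (intro mult_left_mono) auto
      then show ?thesis unfolding key[OF x(1)] by (simp add: algebra_simps)
    qed
    ultimately show "\<exists>y. ((\<lambda>u. -(exp (-\<theta>*u) * Y u + L * \<Phi> u)) has_real_derivative y) (at x) \<and> 0 \<le> y"
      by blast
  qed (intro continuous_intros cW c\<Phi>)
  have lo: "exp (-\<theta>*0) * Y 0 - L * \<Phi> 0 \<le> exp (-\<theta>*T) * Y T - L * \<Phi> T"
  proof (rule DERIV_nonneg_imp_increasing_open[OF T])
    fix x assume x: "0 < x" "x < T"
    have "((\<lambda>u. exp (-\<theta>*u) * Y u - L * \<Phi> u) has_real_derivative
        (exp (-\<theta>*x) * (Xp x - \<theta> * Y x) - L * (- (x+1) * exp (-\<theta>*x)))) (at x)"
      by (intro derivative_intros DERIV_cmult d\<Phi> dW x)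
    moreover have "0 \<le> exp (-\<theta>*x) * (Xp x - \<theta> * Y x) - L * (- (x+1) * exp (-\<theta>*x))"
    proof -
      have "\<bar>\<mu> * \<theta> * x + Gp x\<bar> \<le> L * (x + 1)" using Gb x by simp
      then have "-(L * (x + 1)) \<le> \<mu> * \<theta> * x + Gp x" by linarith
      then have "exp (-\<theta>*x) * (-(L * (x + 1))) \<le> exp (-\<theta>*x) * (\<mu> * \<theta> * x + Gp x)"
        by (intro mult_left_mono) auto
      then show ?thesis unfolding key[OF x(1)] by (simp add: algebra_simps)
    qed
    ultimately show "\<exists>y. ((\<lambda>u. exp (-\<theta>*u) * Y u - L * \<Phi> u) has_real_derivative y) (at x) \<and> 0 \<le> y"
      by blast
  qed (intro continuous_intros cW c\<Phi>)
  have L0: "0 \<le> L" using Gb[rule_format, of 0] by (smt (verit) abs_ge_zero mult_cancel_left1)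
  have "L * \<Phi> T \<ge> 0" using L0 \<Phi>nn[OF T] by simp
  then have "\<bar>exp (-\<theta>*T) * Y T\<bar> \<le> Q" using up lo Y0 \<Phi>0 unfolding Q_def by (simp add: abs_le_iff)
  then have "exp (-\<theta>*T) * \<bar>Y T\<bar> \<le> Q" by (simp add: abs_mult)
  then have "exp (\<theta>*T) * (exp (-\<theta>*T) * \<bar>Y T\<bar>) \<le> exp (\<theta>*T) * Q" by (intro mult_left_mono) auto
  then have "\<bar>Y T\<bar> \<le> exp (\<theta>*T) * Q" by (simp add: exp_minus field_simps)
  then show ?thesis unfolding Y_def Q_def by (simp add: mult.commute)
qed

lemma second_limit:
  fixes Xp Gp :: "real \<Rightarrow> real"
  assumes th: "0 < \<theta>" and d0: "0 \<le> d" and d1: "d < 1"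
    and cG: "\<forall>K. continuous_on {0..K} Gp"
    and cX: "continuous_on {0..} Xp"
    and eq: "\<forall>t\<ge>0. Xp t = \<mu> * \<theta> * t + \<theta> * integral {0..t} Xp + Gp t"
    and gb: "\<forall>t\<ge>N. \<bar>Gp t\<bar> \<le> 2 * (t + 1) powr d"
  shows "((\<lambda>T. exp (- \<theta> * T) / T * integral {0..T} (\<lambda>t. \<bar>Gp t * Xp t\<bar>)) \<longlongrightarrow> 0) at_top"
proof -
  define N' where "N' = max N 0"
  have "bounded (Gp ` {0..N'})"
    by (intro compact_imp_bounded compact_continuous_image) (use cG in auto)
  then obtain Bc where Bc: "\<forall>t\<in>{0..N'}. \<bar>Gp t\<bar> \<le> Bc" unfolding bounded_iff by auto
  define H where "H = \<bar>Bc\<bar> + 2"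
  have H0: "0 \<le> H" unfolding H_def by simp
  have pw1: "1 \<le> (t + 1) powr d" if "0 \<le> t" for t :: real
    using that d0 by (intro ge_one_powr_ge_zero) auto
  have pwt: "(t + 1) powr d \<le> t + 1" if "0 \<le> t" for t :: real
  proof -
    have "(t + 1) powr d \<le> (t + 1) powr 1" using that d1 by (intro powr_mono) auto
    then show ?thesis using that by simp
  qed
  have HG: "\<bar>Gp t\<bar> \<le> H * (t + 1) powr d" if t: "0 \<le> t" for t
  proof (cases "t \<le> N'")
    case True
    then have "\<bar>Gp t\<bar> \<le> Bc" using Bc t by auto
    also have "\<dots> \<le> \<bar>Bc\<bar>" by simp
    also have "\<dots> \<le> H * 1" unfolding H_def by simp
    also have "\<dots> \<le> H * (t + 1) powr d" using pw1[OF t] H0 by (intro mult_left_mono) auto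
    finally show ?thesis .
  next
    case False
    then have "\<bar>Gp t\<bar> \<le> 2 * (t + 1) powr d" using gb unfolding N'_def by auto
    also have "\<dots> \<le> H * (t + 1) powr d" unfolding H_def by (intro mult_right_mono) auto
    finally show ?thesis .
  qed
  define L where "L = \<bar>\<mu>\<bar> * \<theta> + H"
  have L0: "0 \<le> L" unfolding L_def using th H0 by simp
  have Gb: "\<forall>t\<ge>0. \<bar>\<mu> * \<theta> * t + Gp t\<bar> \<le> L * (t + 1)"
  proof (intro allI impI)
    fix t :: real assume t: "0 \<le> t"
    have "\<bar>\<mu> * \<theta> * t + Gp t\<bar> \<le> \<bar>\<mu>\<bar> * \<theta> * t + \<bar>Gp t\<bar>"
      using th t by (simp add: abs_mult abs_triangle_ineq order_trans[OF abs_triangle_ineq])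
    also have "\<dots> \<le> \<bar>\<mu>\<bar> * \<theta> * (t + 1) + H * (t + 1)"
      using HG[OF t] pwt[OF t] H0 th by (intro add_mono) (auto intro: order_trans mult_left_mono)
    also have "\<dots> = L * (t + 1)" unfolding L_def by (simp add: algebra_simps)
    finally show "\<bar>\<mu> * \<theta> * t + Gp t\<bar> \<le> L * (t + 1)" .
  qed
  define Q where "Q = L * (1/\<theta> + 1/\<theta>^2)"
  have Q0: "0 \<le> Q" unfolding Q_def using L0 th by simp
  define R where "R = L * (1 + 1/\<theta>) + \<theta> * Q"
  have R0: "0 \<le> R" unfolding R_def using L0 th Q0 by simp
  have XB: "\<bar>Xp t\<bar> \<le> R * exp (\<theta> * t)" if t: "0 \<le> t" for t
  proof -
    have Yb: "\<bar>integral {0..t} Xp\<bar> \<le> Q * exp (\<theta> * t)"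
      unfolding Q_def by (rule Y_bound[OF th cX eq Gb t])
    have e1: "1 \<le> exp (\<theta> * t)" using th t by simp
    have e2: "1 + \<theta> * t \<le> exp (\<theta> * t)" by (rule exp_ge_add_one_self)
    have "\<theta> * t \<le> exp (\<theta> * t)" using e2 by linarith
    then have "t \<le> exp (\<theta> * t) / \<theta>" using th by (simp add: pos_le_divide_eq mult.commute)
    moreover have "(1 + 1/\<theta>) * exp (\<theta> * t) = exp (\<theta> * t) + exp (\<theta> * t) / \<theta>"
      by (simp add: algebra_simps)
    ultimately have tt: "t + 1 \<le> (1 + 1/\<theta>) * exp (\<theta> * t)" using e1 by linarith
    have xe: "Xp t = (\<mu> * \<theta> * t + Gp t) + \<theta> * integral {0..t} Xp" using eq t by simp
    have b0: "\<bar>Xp t\<bar> \<le> \<bar>\<mu> * \<theta> * t + Gp t\<bar> + \<bar>\<theta> * integral {0..t} Xp\<bar>"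
      unfolding xe by (rule abs_triangle_ineq)
    have b1: "\<bar>\<theta> * integral {0..t} Xp\<bar> = \<theta> * \<bar>integral {0..t} Xp\<bar>" using th by (simp add: abs_mult)
    have b2: "\<bar>\<mu> * \<theta> * t + Gp t\<bar> \<le> L * (t + 1)" using Gb t by simp
    have b3: "L * (t + 1) \<le> L * ((1 + 1/\<theta>) * exp (\<theta> * t))" using tt L0 by (rule mult_left_mono)
    have b4: "\<theta> * \<bar>integral {0..t} Xp\<bar> \<le> \<theta> * (Q * exp (\<theta> * t))" using Yb th by (intro mult_left_mono) auto
    have b5: "L * ((1 + 1/\<theta>) * exp (\<theta> * t)) + \<theta> * (Q * exp (\<theta> * t)) = R * exp (\<theta> * t)"
      unfolding R_def by (simp add: algebra_simps)
    show ?thesis using b0 b1 b2 b3 b4 b5 by linarith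
  qed
  define C where "C = H * R / \<theta> * 2 powr d"
  have ev: "\<forall>\<^sub>F T in at_top. norm (exp (- \<theta> * T) / T * integral {0..T} (\<lambda>t. \<bar>Gp t * Xp t\<bar>)) \<le> C * T powr (d - 1)"
    using eventually_ge_at_top[of "1::real"]
  proof eventually_elim
    case (elim T)
    have T0: "0 \<le> T" using elim by simp
    have contGX: "continuous_on {0..T} (\<lambda>t. \<bar>Gp t * Xp t\<bar>)"
      using cG cX by (intro continuous_intros) (auto intro: continuous_on_subset)
    have int1: "(\<lambda>t. \<bar>Gp t * Xp t\<bar>) integrable_on {0..T}"
      by (rule integrable_continuous_interval[OF contGX])
    have hexp: "((\<lambda>t. exp (\<theta> * t)) has_integral (exp (\<theta> * T) / \<theta> - exp (\<theta> * 0) / \<theta>)) {0..T}"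
      by (rule fundamental_theorem_of_calculus[OF T0])
         (use th in \<open>auto intro!: derivative_eq_intros simp: has_real_derivative_iff_has_vector_derivative[symmetric]\<close>)
    define D where "D = H * (T + 1) powr d * R"
    have D0: "0 \<le> D" unfolding D_def using H0 R0 by simp
    have hexpD: "((\<lambda>t. D * exp (\<theta> * t)) has_integral D * (exp (\<theta> * T) / \<theta> - exp (\<theta> * 0) / \<theta>)) {0..T}"
      by (rule has_integral_mult_right[OF hexp])
    have int2: "(\<lambda>t. D * exp (\<theta> * t)) integrable_on {0..T}"
      using hexpD by blast
    have "integral {0..T} (\<lambda>t. \<bar>Gp t * Xp t\<bar>) \<le> integral {0..T} (\<lambda>t. D * exp (\<theta> * t))"
    proof (rule integral_le[OF int1 int2])
      fix t assume t: "t \<in> {0..T}"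
      have "\<bar>Gp t * Xp t\<bar> = \<bar>Gp t\<bar> * \<bar>Xp t\<bar>" by (simp add: abs_mult)
      also have "\<dots> \<le> (H * (T + 1) powr d) * (R * exp (\<theta> * t))"
      proof (rule mult_mono)
        have "(t + 1) powr d \<le> (T + 1) powr d" using t d0 by (intro powr_mono2) auto
        then show "\<bar>Gp t\<bar> \<le> H * (T + 1) powr d" using HG[of t] t H0 by (smt (verit) atLeastAtMost_iff mult_left_mono)
        show "\<bar>Xp t\<bar> \<le> R * exp (\<theta> * t)" using XB t by auto
      qed (use H0 in auto)
      also have "\<dots> = D * exp (\<theta> * t)" unfolding D_def by simp
      finally show "\<bar>Gp t * Xp t\<bar> \<le> D * exp (\<theta> * t)" .
    qed
    also have "\<dots> = D * (exp (\<theta> * T) / \<theta> - 1 / \<theta>)"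
      using integral_unique[OF hexpD] by simp
    also have "\<dots> \<le> D * (exp (\<theta> * T) / \<theta>)" using D0 th by (intro mult_left_mono) auto
    finally have Ib: "integral {0..T} (\<lambda>t. \<bar>Gp t * Xp t\<bar>) \<le> D * (exp (\<theta> * T) / \<theta>)" .
    have I0: "0 \<le> integral {0..T} (\<lambda>t. \<bar>Gp t * Xp t\<bar>)"
      by (rule integral_nonneg[OF int1]) auto
    have "norm (exp (- \<theta> * T) / T * integral {0..T} (\<lambda>t. \<bar>Gp t * Xp t\<bar>))
        = exp (- \<theta> * T) / T * integral {0..T} (\<lambda>t. \<bar>Gp t * Xp t\<bar>)"
      using I0 T0 by simp
    also have "\<dots> \<le> exp (- \<theta> * T) / T * (D * (exp (\<theta> * T) / \<theta>))"
      using Ib T0 by (intro mult_left_mono) auto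
    also have "\<dots> = H * R / \<theta> * ((T + 1) powr d / T)"
      unfolding D_def using elim th by (simp add: exp_minus field_simps)
    also have "(T + 1) powr d / T \<le> 2 powr d * T powr (d - 1)"
    proof -
      have "(T + 1) powr d \<le> (2 * T) powr d" using elim d0 by (intro powr_mono2) auto
      also have "\<dots> = 2 powr d * T powr d" using elim by (simp add: powr_mult)
      finally have "(T + 1) powr d / T \<le> 2 powr d * T powr d / T" using elim by (simp add: divide_right_mono)
      also have "T powr d / T = T powr (d - 1)" using elim by (simp add: powr_diff)
      then have "2 powr d * T powr d / T = 2 powr d * T powr (d - 1)" by (simp add: mult.assoc times_divide_eq_right[symmetric])
      finally show ?thesis .
    qed
    then have "H * R / \<theta> * ((T + 1) powr d / T) \<le> H * R / \<theta> * (2 powr d * T powr (d - 1))"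
      using H0 R0 th by (intro mult_left_mono) auto
    finally show ?case unfolding C_def by (simp add: mult.assoc)
  qed
  have lim: "((\<lambda>T. C * T powr (d - 1)) \<longlongrightarrow> 0) at_top"
    by (intro tendsto_mult_right_zero tendsto_neg_powr filterlim_ident) (use d1 in auto)
  show ?thesis by (rule Lim_null_comparison[OF ev lim])
qed

lemma first_limit:
  fixes g :: "real \<Rightarrow> real"
  assumes gb: "\<forall>t\<ge>N. \<bar>g t\<bar> \<le> 2 * (t + 1) powr d" and d0: "0 \<le> d" and dd: "d < \<delta>"
  shows "((\<lambda>T. g T / T powr \<delta>) \<longlongrightarrow> 0) at_top"
proof -
  have ev: "\<forall>\<^sub>F T in at_top. norm (g T / T powr \<delta>) \<le> 2 * 2 powr d * T powr (d - \<delta>)"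
    using eventually_ge_at_top[of "max N 1"]
  proof eventually_elim
    case (elim T)
    then have T1: "1 \<le> T" and TN: "N \<le> T" by auto
    have "\<bar>g T\<bar> \<le> 2 * (T + 1) powr d" using gb TN by auto
    also have "(T + 1) powr d \<le> (2 * T) powr d" using T1 d0 by (intro powr_mono2) auto
    also have "(2 * T) powr d = 2 powr d * T powr d" using T1 by (simp add: powr_mult)
    finally have a: "\<bar>g T\<bar> \<le> 2 * (2 powr d * T powr d)" by simp
    have Tp: "0 < T powr \<delta>" using T1 by simp
    have "norm (g T / T powr \<delta>) = \<bar>g T\<bar> / T powr \<delta>" using Tp by (simp add: abs_div)
    also have "\<dots> \<le> 2 * (2 powr d * T powr d) / T powr \<delta>" using a Tp by (intro divide_right_mono) auto
    also have "\<dots> = 2 * 2 powr d * (T powr d / T powr \<delta>)" by simp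
    also have "T powr d / T powr \<delta> = T powr (d - \<delta>)" using T1 by (simp add: powr_diff)
    finally show ?case .
  qed
  have lim: "((\<lambda>T. 2 * 2 powr d * T powr (d - \<delta>)) \<longlongrightarrow> 0) at_top"
    by (intro tendsto_mult_right_zero tendsto_neg_powr filterlim_ident) (use dd in auto)
  show ?thesis by (rule Lim_null_comparison[OF ev lim])
qed

theorem mainTheorem1:
  fixes M :: "'a measure" and G X :: "real \<Rightarrow> 'a \<Rightarrow> real"
    and c \<gamma> \<theta> \<mu> \<delta> :: real
  assumes "prob_space M"
    and "gaussian_process M G"
    and centered: "\<forall>t\<ge>0. prob_space.expectation M (G t) = 0"
    and G0: "AE x in M. G 0 x = 0"
    and "c > 0" and "0 < \<gamma>" and "\<gamma> < 1"
    and incr: "\<forall>s\<ge>0. \<forall>t\<ge>0. prob_space.expectation M (\<lambda>x. (G t x - G s x)\<^sup>2) \<le> c * \<bar>t - s\<bar> powr (2 * \<gamma>)"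
    and holder: "\<forall>x\<in>space M. \<forall>\<epsilon>. 0 < \<epsilon> \<and> \<epsilon> < \<gamma> \<longrightarrow> locally_holder_nonneg (\<gamma> - \<epsilon>) (\<lambda>t. G t x)"
    and "\<theta> > 0"
    and Xcont: "\<forall>x\<in>space M. continuous_on {0..} (\<lambda>t. X t x)"
    and Xeq: "\<forall>x\<in>space M. \<forall>t\<ge>0.
               X t x = \<mu> * \<theta> * t + \<theta> * integral {0..t} (\<lambda>s. X s x) + G t x"
    and "\<gamma> < \<delta>" and "\<delta> \<le> 1"
  shows "AE x in M.
           ((\<lambda>T. G T x / T powr \<delta>) \<longlongrightarrow> 0) at_top \<and>
           ((\<lambda>T. exp (- \<theta> * T) / T * integral {0..T} (\<lambda>t. \<bar>G t x * X t x\<bar>)) \<longlongrightarrow> 0) at_top"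
proof -
  have cont: "\<forall>x\<in>space M. \<forall>K. continuous_on {0..K} (\<lambda>t. G t x)"
  proof (intro ballI allI)
    fix x K assume x: "x \<in> space M"
    show "continuous_on {0..K} (\<lambda>t. G t x)"
    proof (cases "0 \<le> K")
      case True
      have "locally_holder_nonneg (\<gamma> - \<gamma>/2) (\<lambda>t. G t x)"
        using holder[rule_format, OF x, of "\<gamma>/2"] \<open>0 < \<gamma>\<close> by simp
      then obtain C where "\<forall>s\<in>{0..K}. \<forall>t\<in>{0..K}. \<bar>G t x - G s x\<bar> \<le> C * \<bar>t - s\<bar> powr (\<gamma> - \<gamma>/2)"
        unfolding locally_holder_nonneg_def using True by blast
      then show ?thesis by (rule holder_cont) (use \<open>0 < \<gamma>\<close> in simp)
    next
      case False
      then show ?thesis by simp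
    qed
  qed
  define d where "d = (\<gamma> + \<delta>) / 2"
  have d1: "\<gamma> < d" "d < \<delta>" "0 \<le> d" "d < 1" unfolding d_def using \<open>\<gamma> < \<delta>\<close> \<open>\<delta> \<le> 1\<close> \<open>0 < \<gamma>\<close> by auto
  have gr: "AE x in M. \<exists>N. \<forall>t\<ge>N. \<bar>G t x\<bar> \<le> 2 * (t + 1) powr d"
    by (rule growth[OF assms(1,2) incr \<open>c > 0\<close> \<open>0 < \<gamma>\<close> d1(1) cont G0])
  show ?thesis
    using gr AE_space
  proof eventually_elim
    case (elim x)
    then obtain N where N: "\<forall>t\<ge>N. \<bar>G t x\<bar> \<le> 2 * (t + 1) powr d" by blast
    have x: "x \<in> space M" using elim by blast
    have A: "((\<lambda>T. G T x / T powr \<delta>) \<longlongrightarrow> 0) at_top"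
      by (rule first_limit[OF N d1(3) d1(2)])
    have B: "((\<lambda>T. exp (- \<theta> * T) / T * integral {0..T} (\<lambda>t. \<bar>G t x * X t x\<bar>)) \<longlongrightarrow> 0) at_top"
      by (rule second_limit[where Gp="\<lambda>t. G t x" and Xp="\<lambda>t. X t x", OF \<open>\<theta> > 0\<close> d1(3) d1(4) _ _ _ N])
         (use cont Xcont Xeq x in auto)
    show ?case using A B by blast
  qed
qed

end
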